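(* In every BZ algebra, and in every BCC algebra, property (Ex) holds if and only if property (BB) holds.
   Context: Let $(A,\to,1)$ be an algebra of type $(2,0)$. Properties, required for all $x,y,z\in A$: (Re) $x\to x=1$; (M) $1\to x=x$; (L) $x\to 1=1$; (B) $(y\to z)\to((x\to y)\to(x\to z))=1$; (An) $x\to y=1$ and $y\to x=1$ imply $x=y$; (Ex) $x\to(y\to z)=y\to(x\to z)$; (BB) $(y\to z)\to((z\to x)\to(y\to x))=1$. A BZ algebra is an algebra satisfying (Re), (M), (B), (An). A BCC algebra is an algebra satisfying (Re), (M), (L), (B), (An). *)

theory Defs
  imports Main
begin

definition prop_Re :: "('a \<Rightarrow> 'a \<Rightarrow> 'a) \<Rightarrow> 'a \<Rightarrow> bool" where
  "prop_Re imp one \<longleftrightarrow> (\<forall>x. imp x x = one)"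

definition prop_M :: "('a \<Rightarrow> 'a \<Rightarrow> 'a) \<Rightarrow> 'a \<Rightarrow> bool" where
  "prop_M imp one \<longleftrightarrow> (\<forall>x. imp one x = x)"

definition prop_L :: "('a \<Rightarrow> 'a \<Rightarrow> 'a) \<Rightarrow> 'a \<Rightarrow> bool" where
  "prop_L imp one \<longleftrightarrow> (\<forall>x. imp x one = one)"

definition prop_B :: "('a \<Rightarrow> 'a \<Rightarrow> 'a) \<Rightarrow> 'a \<Rightarrow> bool" where
  "prop_B imp one \<longleftrightarrow>
     (\<forall>x y z. imp (imp y z) (imp (imp x y) (imp x z)) = one)"

definition prop_An :: "('a \<Rightarrow> 'a \<Rightarrow> 'a) \<Rightarrow> 'a \<Rightarrow> bool" where
  "prop_An imp one \<longleftrightarrow> (\<forall>x y. imp x y = one \<and> imp y x = one \<longrightarrow> x = y)"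

definition prop_Ex :: "('a \<Rightarrow> 'a \<Rightarrow> 'a) \<Rightarrow> bool" where
  "prop_Ex imp \<longleftrightarrow> (\<forall>x y z. imp x (imp y z) = imp y (imp x z))"

definition prop_BB :: "('a \<Rightarrow> 'a \<Rightarrow> 'a) \<Rightarrow> 'a \<Rightarrow> bool" where
  "prop_BB imp one \<longleftrightarrow>
     (\<forall>x y z. imp (imp y z) (imp (imp z x) (imp y x)) = one)"

definition BZ_algebra :: "('a \<Rightarrow> 'a \<Rightarrow> 'a) \<Rightarrow> 'a \<Rightarrow> bool" where
  "BZ_algebra imp one \<longleftrightarrow>
     prop_Re imp one \<and> prop_M imp one \<and> prop_B imp one \<and> prop_An imp one"

definition BCC_algebra :: "('a \<Rightarrow> 'a \<Rightarrow> 'a) \<Rightarrow> 'a \<Rightarrow> bool" where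
  "BCC_algebra imp one \<longleftrightarrow>
     prop_Re imp one \<and> prop_M imp one \<and> prop_L imp one \<and> prop_B imp one \<and> prop_An imp one"

end

theory Submission
  imports Defs
begin

lemma bz_BB_Ex:
  assumes Re: "\<And>x. imp x x = one" and M: "\<And>x. imp one x = x"
    and B: "\<And>x y z. imp (imp y z) (imp (imp x y) (imp x z)) = one"
    and An: "\<And>x y. imp x y = one \<Longrightarrow> imp y x = one \<Longrightarrow> x = y"
    and BB: "\<And>x y z. imp (imp y z) (imp (imp z x) (imp y x)) = one"
  shows "imp x (imp y z) = imp y (imp x z)"
proof -
  have tr: "imp a c = one" if "imp a b = one" "imp b c = one" for a b c
    using B[where x=a and y=b and z=c] that M by metis
  have anti: "imp (imp b w) (imp a w) = one" if "imp a b = one" for a b w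
    using BB[where x=w and y=a and z=b] that M by metis
  have up: "imp a (imp (imp a w) w) = one" for a w
    using BB[where x=w and y=one and z=a] M by metis
  have key: "imp (imp x (imp y z)) (imp y (imp x z)) = one" for x y z
  proof -
    have "imp (imp x (imp y z)) (imp (imp (imp y z) z) (imp x z)) = one"
      using BB[where x=z and y=x and z="imp y z"] .
    moreover have "imp (imp (imp (imp y z) z) (imp x z)) (imp y (imp x z)) = one"
      using anti[OF up[of y z]] .
    ultimately show ?thesis using tr by blast
  qed
  show ?thesis using An[OF key key] .
qed

theorem corollary2p5:
  fixes imp :: "'a \<Rightarrow> 'a \<Rightarrow> 'a" and one :: 'a
  shows "(BZ_algebra imp one \<longrightarrow> (prop_Ex imp \<longleftrightarrow> prop_BB imp one)) \<and>
         (BCC_algebra imp one \<longrightarrow> (prop_Ex imp \<longleftrightarrow> prop_BB imp one))"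
proof -
  have main: "prop_Ex imp \<longleftrightarrow> prop_BB imp one" if "BZ_algebra imp one"
  proof
    assume Ex: "prop_Ex imp"
    show "prop_BB imp one" unfolding prop_BB_def
    proof (intro allI)
      fix x y z
      have "imp (imp z x) (imp (imp y z) (imp y x)) = one"
        using that unfolding BZ_algebra_def prop_B_def by blast
      thus "imp (imp y z) (imp (imp z x) (imp y x)) = one"
        using Ex unfolding prop_Ex_def by metis
    qed
  next
    assume "prop_BB imp one"
    then show "prop_Ex imp" unfolding prop_Ex_def
      using that bz_BB_Ex[of imp one]
      unfolding BZ_algebra_def prop_Re_def prop_M_def prop_B_def prop_An_def prop_BB_def
      by blast
  qed
  moreover have "BCC_algebra imp one \<Longrightarrow> BZ_algebra imp one"
    unfolding BCC_algebra_def BZ_algebra_def by blast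
  ultimately show ?thesis by blast
qed

end
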